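(* Suppose $K\in\mathbb{K}$ and $K'=K-2\eta L^K$ (i.e. $K_i'=K_i-2\eta L_i^K$ for each $i$). If $$0<\eta\le\frac{1}{2\|R+B^T\mathcal{E}(P^K)B\|_{\max}},$$ then $K'\in\mathbb{K}$.
   Context: Let $N_s\ge 1$, $\Omega=\{1,\dots,N_s\}$; tuples $V=(V_1,\dots,V_{N_s})$ of matrices are combined componentwise (so $(R+B^T\mathcal{E}(P^K)B)_i=R_i+B_i^T\mathcal{E}_i(P^K)B_i$), $\|V\|_{\max}=\max_i\|V_i\|$ (spectral norm). Markovian jump linear system: $x_{t+1}=A_{\omega(t)}x_t+B_{\omega(t)}u_t$, $A_i\in\mathbb{R}^{d\times d}$, $B_i\in\mathbb{R}^{d\times k}$; $\{\omega(t)\}$ is a time-homogeneous Markov chain on $\Omega$ with transition probabilities $p_{ij}$ and initial distribution $\pi$ with $\pi_i>0$; $x_0$ is random, independent of the chain, with $\mathbb{E}[x_0x_0^T]\succ0$. The system is mean-square stabilizable. $Q=(Q_i)\succ0$, $R=(R_i)\succ0$. For $K=(K_i)$, $K_i\in\mathbb{R}^{k\times d}$, $u_t=-K_{\omega(t)}x_t$. $\mathbb{K}$ is the set of $K$ making the closed loop $x_{t+1}=(A_{\omega(t)}-B_{\omega(t)}K_{\omega(t)})x_t$ mean-square stable ($\mathbb{E}[x_tx_t^T]\to0$ for all initial conditions). $\mathcal{E}_i(V)=\sum_jp_{ij}V_j$. For $K\in\mathbb{K}$, $P^K$ is the unique solution of $P_i^K=Q_i+K_i^TR_iK_i+(A_i-B_iK_i)^T\mathcal{E}_i(P^K)(A_i-B_iK_i)$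 and $L_i^K=(R_i+B_i^T\mathcal{E}_i(P^K)B_i)K_i-B_i^T\mathcal{E}_i(P^K)A_i$. *)

theory Defs
  imports "HOL-Analysis.Analysis"
begin

text \<open>Modes are elements of a finite type 's (so N_s = CARD('s) >= 1 automatically);
 states live in real^'n, inputs in real^'m. A_i :: real^'n^'n, B_i :: real^'m^'n (d x k),
 K_i :: real^'n^'m (k x d).\<close>

definition stochastic :: "('s::finite \<Rightarrow> 's \<Rightarrow> real) \<Rightarrow> bool" where
  "stochastic p \<longleftrightarrow> (\<forall>i j. 0 \<le> p i j) \<and> (\<forall>i. (\<Sum>j\<in>UNIV. p i j) = 1)"

definition pos_def :: "real^'n^'n \<Rightarrow> bool" where
  "pos_def M \<longleftrightarrow> transpose M = M \<and> (\<forall>x. x \<noteq> 0 \<longrightarrow> 0 < x \<bullet> (M *v x))"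

definition outer :: "real^'n \<Rightarrow> real^'n \<Rightarrow> real^'n^'n" where
  "outer x y = (\<chi> a b. x $ a * y $ b)"

definition closed_loop ::
  "('s \<Rightarrow> real^'n^'n) \<Rightarrow> ('s \<Rightarrow> real^'m^'n) \<Rightarrow> ('s \<Rightarrow> real^'n^'m) \<Rightarrow> 's \<Rightarrow> real^'n^'n" where
  "closed_loop A B K i = A i - B i ** K i"

text \<open>Second moments X_i(t) = E[x_t x_t^T 1{omega(t)=i}] of the closed loop
 x_{t+1} = (A_w - B_w K_w) x_t, with the Markov chain transition probabilities p.\<close>
fun second_moment ::
  "('s::finite \<Rightarrow> real^'n^'n) \<Rightarrow> ('s \<Rightarrow> real^'m^'n) \<Rightarrow> ('s \<Rightarrow> 's \<Rightarrow> real) \<Rightarrow>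
   ('s \<Rightarrow> real^'n^'m) \<Rightarrow> ('s \<Rightarrow> real^'n^'n) \<Rightarrow> nat \<Rightarrow> 's \<Rightarrow> real^'n^'n" where
  "second_moment A B p K X0 0 = X0"
| "second_moment A B p K X0 (Suc t) =
     (\<lambda>j. \<Sum>i\<in>UNIV. p i j *\<^sub>R (closed_loop A B K i ** second_moment A B p K X0 t i
                                   ** transpose (closed_loop A B K i)))"

definition ms_stable ::
  "('s::finite \<Rightarrow> real^'n^'n) \<Rightarrow> ('s \<Rightarrow> real^'m^'n) \<Rightarrow> ('s \<Rightarrow> 's \<Rightarrow> real) \<Rightarrow>
   ('s \<Rightarrow> real^'n^'m) \<Rightarrow> bool" where
  "ms_stable A B p K \<longleftrightarrow>
     (\<forall>i0 x0. (\<lambda>t. \<Sum>i\<in>UNIV. second_moment A B p K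
                  (\<lambda>j. if j = i0 then outer x0 x0 else 0) t i) \<longlonglongrightarrow> 0)"

definition stabilizing_set ::
  "('s::finite \<Rightarrow> real^'n^'n) \<Rightarrow> ('s \<Rightarrow> real^'m^'n) \<Rightarrow> ('s \<Rightarrow> 's \<Rightarrow> real) \<Rightarrow>
   ('s \<Rightarrow> real^'n^'m) set" where
  "stabilizing_set A B p = {K. ms_stable A B p K}"

definition Emap :: "('s::finite \<Rightarrow> 's \<Rightarrow> real) \<Rightarrow> ('s \<Rightarrow> real^'n^'n) \<Rightarrow> 's \<Rightarrow> real^'n^'n" where
  "Emap p V i = (\<Sum>j\<in>UNIV. p i j *\<^sub>R V j)"

definition P_of ::
  "('s::finite \<Rightarrow> real^'n^'n) \<Rightarrow> ('s \<Rightarrow> real^'m^'n) \<Rightarrow> ('s \<Rightarrow> real^'n^'n) \<Rightarrow>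
   ('s \<Rightarrow> real^'m^'m) \<Rightarrow> ('s \<Rightarrow> 's \<Rightarrow> real) \<Rightarrow> ('s \<Rightarrow> real^'n^'m) \<Rightarrow> 's \<Rightarrow> real^'n^'n" where
  "P_of A B Q R p K = (THE P. \<forall>i. P i = Q i + transpose (K i) ** R i ** K i
        + transpose (closed_loop A B K i) ** Emap p P i ** closed_loop A B K i)"

definition L_of ::
  "('s::finite \<Rightarrow> real^'n^'n) \<Rightarrow> ('s \<Rightarrow> real^'m^'n) \<Rightarrow> ('s \<Rightarrow> real^'n^'n) \<Rightarrow>
   ('s \<Rightarrow> real^'m^'m) \<Rightarrow> ('s \<Rightarrow> 's \<Rightarrow> real) \<Rightarrow> ('s \<Rightarrow> real^'n^'m) \<Rightarrow> 's \<Rightarrow> real^'n^'m" where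
  "L_of A B Q R p K i =
     (let EP = Emap p (P_of A B Q R p K) i in
      (R i + transpose (B i) ** EP ** B i) ** K i - transpose (B i) ** EP ** A i)"

definition spec_norm :: "real^'a^'b \<Rightarrow> real" where
  "spec_norm M = onorm (\<lambda>x. M *v x)"

definition max_norm :: "('s::finite \<Rightarrow> real^'a^'b) \<Rightarrow> real" where
  "max_norm V = Max (range (\<lambda>i. spec_norm (V i)))"

end

theory Submission
  imports Defs
begin

definition tadj :: "('s::finite \<Rightarrow> real^'n^'n) \<Rightarrow> ('s \<Rightarrow> real^'m^'n) \<Rightarrow> ('s \<Rightarrow> 's \<Rightarrow> real) \<Rightarrow>
   ('s \<Rightarrow> real^'n^'m) \<Rightarrow> ('s \<Rightarrow> real^'n^'n) \<Rightarrow> 's \<Rightarrow> real^'n^'n" where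
  "tadj A B p K M i = transpose (closed_loop A B K i) ** Emap p M i ** closed_loop A B K i"

definition ip :: "('s::finite \<Rightarrow> real^'n^'n) \<Rightarrow> ('s \<Rightarrow> real^'n^'n) \<Rightarrow> real" where
  "ip M X = (\<Sum>i\<in>UNIV. \<Sum>a\<in>UNIV. \<Sum>b\<in>UNIV. M i $ a $ b * X i $ a $ b)"

definition blk :: "('s::finite \<Rightarrow> real^'n^'n) \<Rightarrow> ('s \<Rightarrow> real^'n^'n) \<Rightarrow> ('s \<Rightarrow> real^'n^'n) \<Rightarrow> bool" where
  "blk M1 Z M2 \<longleftrightarrow> (\<forall>j u v. 0 \<le> u \<bullet> (M1 j *v u) + 2 * (u \<bullet> (Z j *v v)) + v \<bullet> (M2 j *v v))"

definition bas :: "'s \<Rightarrow> 'n \<Rightarrow> 'n \<Rightarrow> 's \<Rightarrow> real^'n^'n" where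
  "bas j a b = (\<lambda>k. if k = j then (\<chi> r s. if r = a \<and> s = b then 1 else 0) else 0)"

definition ini :: "'s \<Rightarrow> real^'n \<Rightarrow> 's \<Rightarrow> real^'n^'n" where
  "ini i x = (\<lambda>j. if j = i then outer x x else 0)"

lemma tq: "u \<bullet> (transpose C *v w) = (C *v u) \<bullet> w"
  for C :: "real^'n^'m"
proof -
  have "u \<bullet> (transpose C *v w) = (w v* C) \<bullet> u" by (simp add: inner_commute)
  also have "\<dots> = w \<bullet> (C *v u)" by (rule dot_lmul_matrix)
  finally show ?thesis by (simp add: inner_commute)
qed
lemma qf: "u \<bullet> ((transpose C ** E ** C) *v v) = (C *v u) \<bullet> (E *v (C *v v))"
  for C :: "real^'n^'m" and E :: "real^'m^'m"
proof -
  have "(transpose C ** E ** C) *v v = transpose C *v (E *v (C *v v))"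
    by (simp add: matrix_vector_mul_assoc matrix_mul_assoc)
  then show ?thesis
    by (simp only: tq)
qed

lemma emap_mv: "Emap p M i *v w = (\<Sum>j\<in>UNIV. p i j *\<^sub>R (M j *v w))"
  by (simp add: Emap_def vec_eq_iff matrix_vector_mult_def sum_distrib_left sum_distrib_right mult_ac
      sum_component)
  (intro allI, rule sum.swap)

lemma inner_sum_r: "u \<bullet> (\<Sum>j\<in>S. f j) = (\<Sum>j\<in>S. u \<bullet> f j)"
  by (simp add: inner_sum_right)

lemma tadj_qf: "u \<bullet> (tadj A B p K M i *v v) =
   (\<Sum>j\<in>UNIV. p i j * ((closed_loop A B K i *v u) \<bullet> (M j *v (closed_loop A B K i *v v))))"
  unfolding tadj_def qf emap_mv by (simp add: inner_sum_right)

lemma blk_tadj: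
  assumes "\<forall>i j. 0 \<le> p i j" "blk M1 Z M2"
  shows "blk (tadj A B p K M1) (tadj A B p K Z) (tadj A B p K M2)"
  unfolding blk_def
proof (intro allI)
  fix i u v
  let ?C = "closed_loop A B K i"
  have "u \<bullet> (tadj A B p K M1 i *v u) + 2 * (u \<bullet> (tadj A B p K Z i *v v)) + v \<bullet> (tadj A B p K M2 i *v v)
    = (\<Sum>j\<in>UNIV. p i j * ((?C *v u) \<bullet> (M1 j *v (?C *v u)) + 2 * ((?C *v u) \<bullet> (Z j *v (?C *v v)))
        + (?C *v v) \<bullet> (M2 j *v (?C *v v))))"
    unfolding tadj_qf by (simp add: sum.distrib sum_distrib_left algebra_simps)
  also have "\<dots> \<ge> 0"
    using assms unfolding blk_def by (intro sum_nonneg mult_nonneg_nonneg) auto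
  finally show "0 \<le> u \<bullet> (tadj A B p K M1 i *v u) + 2 * (u \<bullet> (tadj A B p K Z i *v v)) + v \<bullet> (tadj A B p K M2 i *v v)" .
qed

lemma blk_pow:
  assumes "\<forall>i j. 0 \<le> p i j" "blk M1 Z M2"
  shows "blk ((tadj A B p K ^^ t) M1) ((tadj A B p K ^^ t) Z) ((tadj A B p K ^^ t) M2)"
  by (induction t) (use assms blk_tadj in auto)

lemma mmt_entry: "(C ** X ** transpose C) $ a $ b = (\<Sum>c\<in>UNIV. \<Sum>d\<in>UNIV. C$a$c * X$c$d * C$b$d)"
  for C :: "real^'n^'m"
  by (simp add: matrix_matrix_mult_def transpose_def sum_distrib_left sum_distrib_right mult_ac)
   (rule sum.swap)

lemma tct_entry: "(transpose C ** E ** C) $ c $ d = (\<Sum>a\<in>UNIV. \<Sum>b\<in>UNIV. C$a$c * E$a$b * C$b$d)"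
  for C :: "real^'n^'m"
  by (simp add: matrix_matrix_mult_def transpose_def sum_distrib_left sum_distrib_right mult_ac)
   (subst sum.swap, simp add: mult_ac)

lemma single_dual: "(\<Sum>a\<in>UNIV. \<Sum>b\<in>UNIV. M$a$b * (C ** X ** transpose C)$a$b)
   = (\<Sum>c\<in>UNIV. \<Sum>d\<in>UNIV. (transpose C ** M ** C)$c$d * X$c$d)"
  for C :: "real^'n^'m"
proof -
  have "(\<Sum>a\<in>UNIV. \<Sum>b\<in>UNIV. M$a$b * (C ** X ** transpose C)$a$b)
     = (\<Sum>a\<in>UNIV. \<Sum>b\<in>UNIV. \<Sum>c\<in>UNIV. \<Sum>d\<in>UNIV. C$a$c * M$a$b * C$b$d * X$c$d)"
    by (simp add: mmt_entry sum_distrib_left mult_ac)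
  also have "\<dots> = (\<Sum>a\<in>UNIV. \<Sum>c\<in>UNIV. \<Sum>b\<in>UNIV. \<Sum>d\<in>UNIV. C$a$c * M$a$b * C$b$d * X$c$d)"
    by (rule sum.cong[OF refl], rule sum.swap)
  also have "\<dots> = (\<Sum>c\<in>UNIV. \<Sum>a\<in>UNIV. \<Sum>b\<in>UNIV. \<Sum>d\<in>UNIV. C$a$c * M$a$b * C$b$d * X$c$d)"
    by (rule sum.swap)
  also have "\<dots> = (\<Sum>c\<in>UNIV. \<Sum>a\<in>UNIV. \<Sum>d\<in>UNIV. \<Sum>b\<in>UNIV. C$a$c * M$a$b * C$b$d * X$c$d)"
    by (rule sum.cong[OF refl], rule sum.cong[OF refl], rule sum.swap)
  also have "\<dots> = (\<Sum>c\<in>UNIV. \<Sum>d\<in>UNIV. \<Sum>a\<in>UNIV. \<Sum>b\<in>UNIV. C$a$c * M$a$b * C$b$d * X$c$d)"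
    by (rule sum.cong[OF refl], rule sum.swap)
  also have "\<dots> = (\<Sum>c\<in>UNIV. \<Sum>d\<in>UNIV. (transpose C ** M ** C)$c$d * X$c$d)"
    by (simp add: tct_entry sum_distrib_right)
  finally show ?thesis .
qed

lemma swap3: "(\<Sum>a\<in>A. \<Sum>b\<in>B. \<Sum>i\<in>I. f i a b) = (\<Sum>i\<in>I. \<Sum>a\<in>A. \<Sum>b\<in>B. f i a b)"
proof -
  have "(\<Sum>a\<in>A. \<Sum>b\<in>B. \<Sum>i\<in>I. f i a b) = (\<Sum>a\<in>A. \<Sum>i\<in>I. \<Sum>b\<in>B. f i a b)"
    by (rule sum.cong[OF refl], rule sum.swap)
  also have "\<dots> = (\<Sum>i\<in>I. \<Sum>a\<in>A. \<Sum>b\<in>B. f i a b)"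
    by (rule sum.swap)
  finally show ?thesis .
qed

lemma tct_sum: "(transpose C ** (\<Sum>j\<in>S. f j) ** C) = (\<Sum>j\<in>S. transpose C ** f j ** C)"
  for C :: "real^'n^'m"
  by (simp add: vec_eq_iff tct_entry sum_component sum_distrib_left sum_distrib_right)
   (intro allI, rule swap3)

lemma tct_scale: "(transpose C ** (c *\<^sub>R E) ** C) = c *\<^sub>R (transpose C ** E ** C)"
  for C :: "real^'n^'m"
  by (simp add: vec_eq_iff tct_entry sum_distrib_left mult_ac)

lemma ip_fwd: "ip M (\<lambda>j. \<Sum>i\<in>UNIV. p i j *\<^sub>R (closed_loop A B K i ** X i ** transpose (closed_loop A B K i)))
   = ip (tadj A B p K M) X"
proof -
  let ?C = "closed_loop A B K"
  have "ip M (\<lambda>j. \<Sum>i\<in>UNIV. p i j *\<^sub>R (?C i ** X i ** transpose (?C i)))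
    = (\<Sum>j\<in>UNIV. \<Sum>a\<in>UNIV. \<Sum>b\<in>UNIV. \<Sum>i\<in>UNIV. p i j * (M j $ a $ b * (?C i ** X i ** transpose (?C i)) $ a $ b))"
    unfolding ip_def by (simp add: sum_component sum_distrib_left mult_ac)
  also have "\<dots> = (\<Sum>j\<in>UNIV. \<Sum>i\<in>UNIV. \<Sum>a\<in>UNIV. \<Sum>b\<in>UNIV. p i j * (M j $ a $ b * (?C i ** X i ** transpose (?C i)) $ a $ b))"
    by (rule sum.cong[OF refl], rule swap3)
  also have "\<dots> = (\<Sum>i\<in>UNIV. \<Sum>j\<in>UNIV. \<Sum>a\<in>UNIV. \<Sum>b\<in>UNIV. p i j * (M j $ a $ b * (?C i ** X i ** transpose (?C i)) $ a $ b))"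
    by (rule sum.swap)
  also have "\<dots> = (\<Sum>i\<in>UNIV. \<Sum>j\<in>UNIV. p i j * (\<Sum>c\<in>UNIV. \<Sum>d\<in>UNIV. (transpose (?C i) ** M j ** ?C i)$c$d * X i $c$d))"
    by (simp add: sum_distrib_left[symmetric] single_dual)
  also have "\<dots> = (\<Sum>i\<in>UNIV. \<Sum>j\<in>UNIV. \<Sum>c\<in>UNIV. \<Sum>d\<in>UNIV. p i j * ((transpose (?C i) ** M j ** ?C i)$c$d * X i $c$d))"
    by (simp add: sum_distrib_left)
  also have "\<dots> = (\<Sum>i\<in>UNIV. \<Sum>c\<in>UNIV. \<Sum>d\<in>UNIV. \<Sum>j\<in>UNIV. p i j * ((transpose (?C i) ** M j ** ?C i)$c$d * X i $c$d))"
    by (rule sum.cong[OF refl], rule swap3[symmetric])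
  also have "\<dots> = ip (tadj A B p K M) X"
    unfolding ip_def tadj_def Emap_def tct_sum tct_scale
    by (simp add: sum_component sum_distrib_left mult_ac)
  finally show ?thesis .
qed

lemma ip_sm: "ip M (second_moment A B p K X0 t) = ip ((tadj A B p K ^^ t) M) X0"
proof (induction t arbitrary: M)
  case 0
  then show ?case by simp
next
  case (Suc t)
  show ?case
    by (simp add: ip_fwd Suc funpow_Suc_right del: funpow.simps)
qed

lemma ip_single: "ip M (\<lambda>j. if j = i then N else 0) = (\<Sum>a\<in>UNIV. \<Sum>b\<in>UNIV. M i $ a $ b * N $ a $ b)"
proof -
  have "\<And>ia. (\<Sum>a\<in>UNIV. \<Sum>b\<in>UNIV. M ia $ a $ b * (if ia = i then N else 0) $ a $ b)
     = (if ia = i then (\<Sum>a\<in>UNIV. \<Sum>b\<in>UNIV. M i $ a $ b * N $ a $ b) else 0)"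
    by auto
  then show ?thesis unfolding ip_def by simp
qed

lemma ip_ini: "ip M (ini i x) = x \<bullet> (M i *v x)"
  unfolding ini_def ip_single
  by (simp add: outer_def matrix_vector_mult_def inner_vec_def sum_distrib_left mult_ac)

lemma ip_single_l: "ip (\<lambda>j. if j = i then N else 0) X = (\<Sum>a\<in>UNIV. \<Sum>b\<in>UNIV. N $ a $ b * X i $ a $ b)"
proof -
  have "\<And>ia. (\<Sum>a\<in>UNIV. \<Sum>b\<in>UNIV. (if ia = i then N else 0) $ a $ b * X ia $ a $ b)
     = (if ia = i then (\<Sum>a\<in>UNIV. \<Sum>b\<in>UNIV. N $ a $ b * X i $ a $ b) else 0)"
    by auto
  then show ?thesis unfolding ip_def by simp
qed

lemma mult_delta: "(if P then 1 else 0) * (y::real) = (if P then y else 0)"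
  by simp

lemma E_sum: "(\<Sum>a'\<in>UNIV. \<Sum>b'\<in>UNIV. (\<chi> r s. if r = a \<and> s = b then 1 else 0) $ a' $ b' * (X::real^'n^'n) $ a' $ b') = X $ a $ b"
proof -
  have "\<And>a'. (\<Sum>b'\<in>UNIV. (\<chi> r s. if r = a \<and> s = b then 1 else 0) $ a' $ b' * X $ a' $ b') = (if a' = a then X $ a $ b else 0)"
    by (case_tac "a' = a") (simp_all add: mult_delta)
  then show ?thesis by simp
qed

lemma E_sum': "(\<Sum>a'\<in>UNIV. \<Sum>b'\<in>UNIV. (X::real^'n^'n) $ a' $ b' * (\<chi> r s. if r = a \<and> s = b then 1 else 0) $ a' $ b') = X $ a $ b"
  by (subst E_sum[symmetric]) (simp add: mult.commute)

lemma ip_bas_l: "ip (bas j a b) X = X j $ a $ b"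
  unfolding bas_def ip_single_l by (rule E_sum)

lemma ip_bas_r: "ip M (bas j a b) = M j $ a $ b"
  unfolding bas_def ip_single by (rule E_sum')

lemma ip_add: "ip (\<lambda>k. M k + N k) X = ip M X + ip N X"
  by (simp add: ip_def sum.distrib distrib_right)

lemma ip_scale: "ip (\<lambda>k. c *\<^sub>R M k) X = c * ip M X"
  by (simp add: ip_def sum_distrib_left mult_ac)

lemma ip_diff: "ip (\<lambda>k. M k - N k) X = ip M X - ip N X"
  by (simp add: ip_def sum_subtractf left_diff_distrib)

lemma E_mv: "(\<chi> r s. if r = a \<and> s = b then 1 else 0) *v v = axis a (v $ b)"
  by (auto simp: vec_eq_iff matrix_vector_mult_def axis_def if_distrib if_distribR cong: if_cong)

lemma bas_qf: "u \<bullet> (bas j a b k *v v) = (if k = j then u $ a * v $ b else 0)"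
  by (simp add: bas_def E_mv inner_axis)

lemma mv_axis: "M *v axis d y = (\<chi> i. M $ i $ d * y)"
  by (auto simp: vec_eq_iff matrix_vector_mult_def axis_def if_distrib if_distribR cong: if_cong)

lemma axis_qf: "axis c x \<bullet> (M *v axis d y) = x * y * M $ c $ d"
  by (simp add: inner_axis' mv_axis)

lemma blk_diag: "blk (bas j a a) (\<lambda>_. 0) (\<lambda>_. 0)"
  unfolding blk_def by (simp add: bas_qf)

lemma blk_off: "blk (bas j a a) (bas j a b) (bas j b b :: 's::finite \<Rightarrow> real^'n^'n)"
  unfolding blk_def
proof (intro allI)
  fix k and u v :: "real^'n"
  have "0 \<le> (u $ a + v $ b)^2" by simp
  then show "0 \<le> u \<bullet> (bas j a a k *v u) + 2 * (u \<bullet> (bas j a b k *v v)) + v \<bullet> (bas j b b k *v v)"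
    by (simp add: bas_qf power2_eq_square algebra_simps)
qed

lemma ini_eq: "(\<lambda>j. if j = i0 then outer x0 x0 else 0) = ini i0 x0"
  by (simp add: ini_def)

lemma diag_nonneg:
  assumes "\<forall>i j. 0 \<le> p i j"
  shows "0 \<le> (tadj A B p K ^^ t) (bas j a a) i $ c $ c"
proof -
  have "blk ((tadj A B p K ^^ t) (bas j a a)) ((tadj A B p K ^^ t) (\<lambda>_. 0)) ((tadj A B p K ^^ t) (\<lambda>_. 0))"
    by (rule blk_pow[OF assms blk_diag])
  then have "0 \<le> axis c 1 \<bullet> ((tadj A B p K ^^ t) (bas j a a) i *v axis c 1)
     + 2 * (axis c 1 \<bullet> ((tadj A B p K ^^ t) (\<lambda>_. 0) i *v 0)) + 0 \<bullet> ((tadj A B p K ^^ t) (\<lambda>_. 0) i *v 0)"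
    unfolding blk_def by blast
  then have "0 \<le> axis c 1 \<bullet> ((tadj A B p K ^^ t) (bas j a a) i *v axis c 1)"
    by simp
  then show ?thesis by (simp add: axis_qf)
qed

lemma stable_diag:
  assumes "\<forall>i j. 0 \<le> p i j" "ms_stable A B p K"
  shows "(\<lambda>t. (tadj A B p K ^^ t) (bas j a a) i $ c $ c) \<longlonglongrightarrow> 0"
proof -
  let ?f = "\<lambda>k t. (tadj A B p K ^^ t) (bas k a a) i $ c $ c"
  let ?X = "ini i (axis c (1::real))"
  have f_eq: "?f k t = second_moment A B p K ?X t k $ a $ a" for k t
  proof -
    have "?f k t = ip ((tadj A B p K ^^ t) (bas k a a)) ?X"
      by (simp add: ip_ini axis_qf)
    also have "\<dots> = second_moment A B p K ?X t k $ a $ a"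
      by (simp add: ip_sm[symmetric] ip_bas_l)
    finally show ?thesis .
  qed
  have "(\<lambda>t. \<Sum>k\<in>UNIV. second_moment A B p K ?X t k) \<longlonglongrightarrow> 0"
    using assms(2) unfolding ms_stable_def ini_eq by blast
  then have "(\<lambda>t. (\<Sum>k\<in>UNIV. second_moment A B p K ?X t k) $ a $ a) \<longlonglongrightarrow> 0 $ a $ a"
    by (intro tendsto_vec_nth)
  then have S: "(\<lambda>t. \<Sum>k\<in>UNIV. ?f k t) \<longlonglongrightarrow> 0"
    by (simp add: f_eq sum_component)
  show ?thesis
  proof (rule Lim_null_comparison[OF _ S], rule always_eventually, intro allI)
    fix t
    have "?f j t \<le> (\<Sum>k\<in>UNIV. ?f k t)"
      by (rule member_le_sum) (auto simp: diag_nonneg[OF assms(1)])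
    moreover have "0 \<le> ?f j t" by (rule diag_nonneg[OF assms(1)])
    ultimately show "norm (?f j t) \<le> (\<Sum>k\<in>UNIV. ?f k t)"
      by simp
  qed
qed

lemma abs_half: "0 \<le> x + 2 * z + y \<Longrightarrow> 0 \<le> x - 2 * z + y \<Longrightarrow> \<bar>z\<bar> \<le> (x + y) / (2::real)"
  by (auto simp: abs_le_iff field_simps)

lemma stable_decay:
  assumes "\<forall>i j. 0 \<le> p i j" "ms_stable A B p K"
  shows "(\<lambda>t. (tadj A B p K ^^ t) (bas j a b) i $ c $ d) \<longlonglongrightarrow> 0"
proof -
  let ?F1 = "\<lambda>t. (tadj A B p K ^^ t) (bas j a a) i $ c $ c"
  let ?F2 = "\<lambda>t. (tadj A B p K ^^ t) (bas j b b) i $ d $ d"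
  let ?Z = "\<lambda>t. (tadj A B p K ^^ t) (bas j a b) i $ c $ d"
  have b: "blk ((tadj A B p K ^^ t) (bas j a a)) ((tadj A B p K ^^ t) (bas j a b)) ((tadj A B p K ^^ t) (bas j b b))" for t
    by (rule blk_pow[OF assms(1) blk_off])
  have le: "\<bar>?Z t\<bar> \<le> (?F1 t + ?F2 t) / 2" for t
  proof -
    have "0 \<le> ?F1 t + 2 * ?Z t + ?F2 t"
    proof -
      have "0 \<le> axis c 1 \<bullet> ((tadj A B p K ^^ t) (bas j a a) i *v axis c 1)
         + 2 * (axis c 1 \<bullet> ((tadj A B p K ^^ t) (bas j a b) i *v axis d 1))
         + axis d 1 \<bullet> ((tadj A B p K ^^ t) (bas j b b) i *v axis d 1)"
        using b[of t] unfolding blk_def by blast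
      then show ?thesis by (simp only: axis_qf mult_1)
    qed
    moreover have "0 \<le> ?F1 t - 2 * ?Z t + ?F2 t"
      using b[of t] unfolding blk_def
      apply (erule_tac x=i in allE, erule_tac x="axis c 1" in allE, erule_tac x="axis d (-1)" in allE)
      by (simp add: axis_qf)
    ultimately show ?thesis by (rule abs_half)
  qed
  have "(\<lambda>t. (?F1 t + ?F2 t) / 2) \<longlonglongrightarrow> (0 + 0) / 2"
    by (intro tendsto_intros stable_diag[OF assms]) simp
  then have lim: "(\<lambda>t. (?F1 t + ?F2 t) / 2) \<longlonglongrightarrow> 0" by simp
  have "\<forall>t. norm (?Z t) \<le> (?F1 t + ?F2 t) / 2" using le by simp
  from Lim_null_comparison[OF always_eventually[OF this] lim] show ?thesis .
qed

lemma sm_entry: "second_moment A B p K X0 t j $ a $ b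
   = (\<Sum>i\<in>UNIV. \<Sum>c\<in>UNIV. \<Sum>d\<in>UNIV. (tadj A B p K ^^ t) (bas j a b) i $ c $ d * X0 i $ c $ d)"
proof -
  have "second_moment A B p K X0 t j $ a $ b = ip (bas j a b) (second_moment A B p K X0 t)"
    by (simp add: ip_bas_l)
  also have "\<dots> = ip ((tadj A B p K ^^ t) (bas j a b)) X0" by (rule ip_sm)
  finally show ?thesis by (simp add: ip_def)
qed

lemma sm_entry_decay:
  assumes "\<forall>i j. 0 \<le> p i j" "ms_stable A B p K"
  shows "(\<lambda>t. second_moment A B p K X0 t j $ a $ b) \<longlonglongrightarrow> 0"
  unfolding sm_entry
  by (intro tendsto_null_sum tendsto_mult_left_zero stable_decay[OF assms])

lemma stable_fwd:
  assumes "\<forall>i j. 0 \<le> p i j" "ms_stable A B p K"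
  shows "(\<lambda>t. ip N (second_moment A B p K X0 t)) \<longlonglongrightarrow> 0"
  unfolding ip_def
  by (intro tendsto_null_sum tendsto_mult_right_zero sm_entry_decay[OF assms])

lemma funpow_fix: "f D = D \<Longrightarrow> (f ^^ t) D = D"
  by (induction t) auto

lemma fix_zero:
  assumes "\<forall>i j. 0 \<le> p i j" "ms_stable A B p K" "\<forall>i. D i = tadj A B p K D i"
  shows "D = (\<lambda>_. 0)"
proof -
  have fx: "tadj A B p K D = D" using assms(3) by auto
  have "D i $ c $ d = 0" for i c d
  proof -
    have "ip D (second_moment A B p K (bas i c d) t) = D i $ c $ d" for t
      by (simp add: ip_sm funpow_fix[where f="tadj A B p K", OF fx] ip_bas_r)
    moreover have "(\<lambda>t. ip D (second_moment A B p K (bas i c d) t)) \<longlonglongrightarrow> 0"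
      by (rule stable_fwd[OF assms(1,2)])
    ultimately have "(\<lambda>t. D i $ c $ d) \<longlonglongrightarrow> 0" by simp
    then show ?thesis by (simp add: LIMSEQ_const_iff)
  qed
  then show ?thesis by (auto simp: vec_eq_iff)
qed

lemma Emap_add: "Emap p (\<lambda>j. M j + N j) i = Emap p M i + Emap p N i"
  by (simp add: Emap_def scaleR_add_right sum.distrib)

lemma Emap_diff: "Emap p (\<lambda>j. M j - N j) i = Emap p M i - Emap p N i"
  by (simp add: Emap_def scaleR_diff_right sum_subtractf)

lemma Emap_scale: "Emap p (\<lambda>j. c *\<^sub>R M j) i = c *\<^sub>R Emap p M i"
  by (simp add: Emap_def scaleR_sum_right mult.commute)

lemma tct_add: "(transpose C ** (E1 + E2) ** C) = (transpose C ** E1 ** C) + (transpose C ** E2 ** C)"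
  for C :: "real^'n^'m"
  by (simp add: vec_eq_iff tct_entry algebra_simps sum.distrib)

lemma tct_diff: "(transpose C ** (E1 - E2) ** C) = (transpose C ** E1 ** C) - (transpose C ** E2 ** C)"
  for C :: "real^'n^'m"
  by (simp add: vec_eq_iff tct_entry algebra_simps sum_subtractf)

lemma tadj_add: "tadj A B p K (\<lambda>j. M j + N j) i = tadj A B p K M i + tadj A B p K N i"
  by (simp add: tadj_def Emap_add tct_add)

lemma tadj_diff: "tadj A B p K (\<lambda>j. M j - N j) i = tadj A B p K M i - tadj A B p K N i"
  by (simp add: tadj_def Emap_diff tct_diff)

lemma tadj_scale: "tadj A B p K (\<lambda>j. c *\<^sub>R M j) i = c *\<^sub>R tadj A B p K M i"
  by (simp add: tadj_def Emap_scale tct_scale)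

lemma nth_add_fun: "($) (x + y) = (\<lambda>j. x $ j + y $ j)"
  by auto

lemma nth_scale_fun: "($) (c *\<^sub>R x) = (\<lambda>j. c *\<^sub>R x $ j)"
  by auto

lemma lyap_exists:
  fixes A :: "'s::finite \<Rightarrow> real^'n^'n" and W :: "'s \<Rightarrow> real^'n^'n"
  assumes "\<forall>i j. 0 \<le> p i j" "ms_stable A B p K"
  shows "\<exists>P. \<forall>i. P i = W i + tadj A B p K P i"
proof -
  define F :: "(real^'n^'n)^'s \<Rightarrow> (real^'n^'n)^'s" where
    "F = (\<lambda>v. \<chi> i. v $ i - tadj A B p K (\<lambda>j. v $ j) i)"
  have lin: "linear F"
  proof (rule linearI)
    fix x y :: "(real^'n^'n)^'s" and c :: real
    show "F (x + y) = F x + F y"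
      unfolding F_def by (simp add: vec_eq_iff nth_add_fun tadj_add)
    show "F (c *\<^sub>R x) = c *\<^sub>R F x"
      unfolding F_def by (simp add: vec_eq_iff nth_scale_fun tadj_scale scaleR_diff_right)
  qed
  have "inj F"
    unfolding linear_inj_iff_eq_0[OF lin]
  proof (intro allI impI)
    fix v assume "F v = 0"
    then have "\<forall>i. (\<lambda>j. v $ j) i = tadj A B p K (\<lambda>j. v $ j) i"
      unfolding F_def by (simp add: vec_eq_iff)
    from fix_zero[OF assms this] show "v = 0"
      by (simp add: vec_eq_iff fun_eq_iff)
  qed
  then have "surj F" using linear_injective_imp_surjective[OF lin] by blast
  then obtain v where v: "F v = (\<chi> i. W i)" by (metis surjD)
  show ?thesis
  proof (intro exI allI)
    fix i
    from v have "v $ i - tadj A B p K (\<lambda>j. v $ j) i = W i"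
      unfolding F_def by (simp add: vec_eq_iff)
    then show "v $ i = W i + tadj A B p K (($) v) i"
      by (simp add: algebra_simps)
  qed
qed

lemma lyap_unique:
  assumes "\<forall>i j. 0 \<le> p i j" "ms_stable A B p K"
    and "\<forall>i. P1 i = W i + tadj A B p K P1 i" "\<forall>i. P2 i = W i + tadj A B p K P2 i"
  shows "P1 = P2"
proof -
  have "\<forall>i. (\<lambda>j. P1 j - P2 j) i = tadj A B p K (\<lambda>j. P1 j - P2 j) i"
  proof
    fix i
    have "P1 i - P2 i = tadj A B p K P1 i - tadj A B p K P2 i"
      using assms(3,4) by (metis add_diff_cancel_left)
    then show "(\<lambda>j. P1 j - P2 j) i = tadj A B p K (\<lambda>j. P1 j - P2 j) i"
      by (simp add: tadj_diff)
  qed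
  from fix_zero[OF assms(1,2) this] show ?thesis
    by (simp add: fun_eq_iff)
qed

lemma P_of_eq:
  assumes "\<forall>i j. 0 \<le> p i j" "ms_stable A B p K"
  shows "\<forall>i. P_of A B Q R p K i = (Q i + transpose (K i) ** R i ** K i) + tadj A B p K (P_of A B Q R p K) i"
proof -
  obtain P where P: "\<forall>i. P i = (Q i + transpose (K i) ** R i ** K i) + tadj A B p K P i"
    using lyap_exists[where W="\<lambda>i. Q i + transpose (K i) ** R i ** K i", OF assms] by blast
  have "P_of A B Q R p K = P"
    unfolding P_of_def
  proof (rule the_equality)
    show "\<forall>i. P i = Q i + transpose (K i) ** R i ** K i
        + transpose (closed_loop A B K i) ** Emap p P i ** closed_loop A B K i"
      using P by (simp add: tadj_def)
    fix P' assume "\<forall>i. P' i = Q i + transpose (K i) ** R i ** K i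
        + transpose (closed_loop A B K i) ** Emap p P' i ** closed_loop A B K i"
    then have "\<forall>i. P' i = (Q i + transpose (K i) ** R i ** K i) + tadj A B p K P' i"
      by (simp add: tadj_def)
    from lyap_unique[OF assms this P] show "P' = P" .
  qed
  then show ?thesis using P by simp
qed

definition psd :: "('s::finite \<Rightarrow> real^'n^'n) \<Rightarrow> bool" where
  "psd M \<longleftrightarrow> (\<forall>j u. 0 \<le> u \<bullet> (M j *v u))"

lemma psd_blk: "psd M \<Longrightarrow> blk M (\<lambda>_. 0) (\<lambda>_. 0)"
  unfolding psd_def blk_def by simp

lemma blk_psd: "blk M Z M2 \<Longrightarrow> 0 \<le> x \<bullet> (M i *v x)"
proof -
  assume "blk M Z M2"
  then have "0 \<le> x \<bullet> (M i *v x) + 2 * (x \<bullet> (Z i *v 0)) + 0 \<bullet> (M2 i *v 0)"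
    unfolding blk_def by blast
  then show ?thesis by simp
qed

lemma psd_pow_ip:
  assumes "\<forall>i j. 0 \<le> p i j" "psd M"
  shows "0 \<le> ip M (second_moment A B p K (ini i x) t)"
proof -
  have "blk ((tadj A B p K ^^ t) M) ((tadj A B p K ^^ t) (\<lambda>_. 0)) ((tadj A B p K ^^ t) (\<lambda>_. 0))"
    by (rule blk_pow[OF assms(1) psd_blk[OF assms(2)]])
  from blk_psd[OF this] show ?thesis
    by (simp add: ip_sm ip_ini)
qed

lemma sm_Suc_ip: "ip M (second_moment A B p K X0 (Suc t)) = ip (tadj A B p K M) (second_moment A B p K X0 t)"
  by (simp only: second_moment.simps ip_fwd)

lemma transpose_add': "transpose (X + Y) = transpose X + transpose (Y::real^'n^'m)"
  by (simp add: transpose_def vec_eq_iff)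

lemma transpose_Emap: "transpose (Emap p M i) = Emap p (\<lambda>j. transpose (M j)) i"
  by (simp add: Emap_def transpose_def vec_eq_iff sum_component)

lemma transpose_tadj: "transpose (tadj A B p K M i) = tadj A B p K (\<lambda>j. transpose (M j)) i"
  by (simp add: tadj_def matrix_transpose_mul transpose_Emap matrix_mul_assoc)

lemma P_sym:
  assumes "\<forall>i j. 0 \<le> p i j" "ms_stable A B p K"
    and "\<forall>i. transpose (Q i) = Q i" "\<forall>i. transpose (R i) = R i"
  shows "transpose (P_of A B Q R p K i) = P_of A B Q R p K i"
proof -
  let ?P = "P_of A B Q R p K"
  let ?W = "\<lambda>i. Q i + transpose (K i) ** R i ** K i"
  have eq: "\<forall>i. ?P i = ?W i + tadj A B p K ?P i" by (rule P_of_eq[OF assms(1,2)])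
  have "\<forall>i. (\<lambda>j. transpose (?P j)) i = ?W i + tadj A B p K (\<lambda>j. transpose (?P j)) i"
  proof
    fix i
    have "transpose (?P i) = transpose (?W i + tadj A B p K ?P i)" using eq by metis
    also have "\<dots> = ?W i + tadj A B p K (\<lambda>j. transpose (?P j)) i"
      using assms(3,4) by (simp add: transpose_add' transpose_tadj matrix_transpose_mul matrix_mul_assoc)
    finally show "(\<lambda>j. transpose (?P j)) i = ?W i + tadj A B p K (\<lambda>j. transpose (?P j)) i" by simp
  qed
  from lyap_unique[OF assms(1,2) this eq] show ?thesis by (simp add: fun_eq_iff)
qed

lemma P_psd:
  assumes "\<forall>i j. 0 \<le> p i j" "ms_stable A B p K" "psd (\<lambda>i. Q i + transpose (K i) ** R i ** K i)"
  shows "0 \<le> u \<bullet> (P_of A B Q R p K i *v u)"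
proof -
  let ?P = "P_of A B Q R p K"
  let ?W = "\<lambda>i. Q i + transpose (K i) ** R i ** K i"
  let ?Y = "second_moment A B p K (ini i u)"
  define h where "h t = ip ?P (?Y t)" for t
  have eq: "?P = (\<lambda>k. ?W k + tadj A B p K ?P k)"
    using P_of_eq[OF assms(1,2)] by (simp add: fun_eq_iff)
  have "h (Suc t) \<le> h t" for t
  proof -
    have "h t = ip (\<lambda>k. ?W k + tadj A B p K ?P k) (?Y t)"
      unfolding h_def by (subst eq) (rule refl)
    also have "\<dots> = ip ?W (?Y t) + h (Suc t)"
      unfolding ip_add h_def sm_Suc_ip by simp
    finally show ?thesis using psd_pow_ip[OF assms(1,3)] by simp
  qed
  then have "decseq h" by (rule decseq_SucI)
  moreover have "h \<longlonglongrightarrow> 0" unfolding h_def by (rule stable_fwd[OF assms(1,2)])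
  ultimately have "0 \<le> h 0" by (rule decseq_ge)
  then show ?thesis by (simp add: h_def ip_ini)
qed

lemma comp_sq_le: "(u $ a) * (u $ a) \<le> u \<bullet> (u::real^'n)"
proof -
  have "(u $ a) * (u $ a) \<le> (\<Sum>i\<in>UNIV. u $ i * u $ i)"
    by (rule member_le_sum) auto
  then show ?thesis by (simp add: inner_vec_def)
qed

lemma bas_diag_qf: "u \<bullet> (bas j a a k *v u) = (if k = j then u $ a * u $ a else 0)"
  by (simp add: bas_qf)

lemma mv_neg: "M *v (- x) = - (M *v (x::real^'n))" for M :: "real^'n^'m"
  using matrix_vector_mult_diff_distrib[of M 0 x] by simp

lemma lyap_stable:
  fixes P Q :: "'s::finite \<Rightarrow> real^'n^'n"
  assumes p: "\<forall>i j. 0 \<le> p i j"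
    and Ppsd: "psd P"
    and dec: "\<forall>i u. u \<bullet> (Q i *v u) + u \<bullet> (tadj A B p K P i *v u) \<le> u \<bullet> (P i *v u)"
    and Qpd: "\<forall>i. \<exists>q>0. \<forall>u. q * (u \<bullet> u) \<le> u \<bullet> (Q i *v u)"
  shows "ms_stable A B p K"
  unfolding ms_stable_def ini_eq
proof (intro allI)
  fix i0 and x0 :: "real^'n"
  let ?Y = "second_moment A B p K (ini i0 x0)"
  let ?T = "tadj A B p K"
  define h where "h t = ip P (?Y t)" for t
  have Qpsd: "psd Q"
    unfolding psd_def
  proof (intro allI)
    fix j u
    obtain q where "q > 0" "\<forall>u. q * (u \<bullet> u) \<le> u \<bullet> (Q j *v u)" using Qpd by blast
    then show "0 \<le> u \<bullet> (Q j *v u)"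
      by (metis inner_ge_zero mult_nonneg_nonneg order.strict_implies_order order_trans)
  qed
  have Dpsd: "psd (\<lambda>i. P i - ?T P i - Q i)"
    unfolding psd_def
  proof (intro allI)
    fix j u
    have "u \<bullet> (Q j *v u) + u \<bullet> (?T P j *v u) \<le> u \<bullet> (P j *v u)" using dec by blast
    then show "0 \<le> u \<bullet> ((P j - ?T P j - Q j) *v u)"
      by (simp add: matrix_vector_mult_diff_rdistrib inner_diff_right)
  qed
  have h_nonneg: "0 \<le> h t" for t
    unfolding h_def by (rule psd_pow_ip[OF p Ppsd])
  have step: "ip Q (?Y t) \<le> h t - h (Suc t)" for t
  proof -
    have "0 \<le> ip (\<lambda>i. P i - ?T P i - Q i) (?Y t)"
      by (rule psd_pow_ip[OF p Dpsd])
    also have "\<dots> = h t - h (Suc t) - ip Q (?Y t)"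
      unfolding h_def sm_Suc_ip by (simp add: ip_diff)
    finally show ?thesis by simp
  qed
  have Qnn: "0 \<le> ip Q (?Y t)" for t
    by (rule psd_pow_ip[OF p Qpsd])
  have "(\<Sum>t<n. ip Q (?Y t)) \<le> h 0 - h n" for n
  proof (induction n)
    case 0 then show ?case by simp
  next
    case (Suc n) then show ?case using step[of n] by simp
  qed
  then have "(\<Sum>t<n. ip Q (?Y t)) \<le> h 0" for n
    using h_nonneg[of n] by (smt (verit))
  then have "summable (\<lambda>t. ip Q (?Y t))"
    by (intro summableI_nonneg_bounded[OF Qnn])
  then have Qlim: "(\<lambda>t. ip Q (?Y t)) \<longlonglongrightarrow> 0"
    by (rule summable_LIMSEQ_zero)
  have diag: "(\<lambda>t. ?Y t j $ a $ a) \<longlonglongrightarrow> 0" for j a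
  proof -
    obtain q where q: "q > 0" "\<forall>u. q * (u \<bullet> u) \<le> u \<bullet> (Q j *v u)" using Qpd by blast
    have ps: "psd (\<lambda>k. Q k - q *\<^sub>R bas j a a k)"
      unfolding psd_def
    proof (intro allI)
      fix k u
      have "u \<bullet> ((Q k - q *\<^sub>R bas j a a k) *v u) = u \<bullet> (Q k *v u) - q * (u \<bullet> (bas j a a k *v u))"
        by (simp add: matrix_vector_mult_diff_rdistrib inner_diff_right scaleR_matrix_vector_assoc[symmetric])
      also have "\<dots> \<ge> 0"
      proof (cases "k = j")
        case True
        have "q * (u $ a * u $ a) \<le> q * (u \<bullet> u)"
          using q(1) comp_sq_le by (intro mult_left_mono) auto
        then show ?thesis using q(2) True by (simp add: bas_diag_qf) (smt (verit))
      next
        case False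
        then show ?thesis using Qpsd unfolding psd_def by (simp add: bas_diag_qf)
      qed
      finally show "0 \<le> u \<bullet> ((Q k - q *\<^sub>R bas j a a k) *v u)" .
    qed
    have nn: "0 \<le> ?Y t j $ a $ a" for t
    proof -
      have "0 \<le> ip (bas j a a) (?Y t)"
        by (rule psd_pow_ip[OF p]) (simp add: psd_def bas_diag_qf)
      then show ?thesis by (simp add: ip_bas_l)
    qed
    have le: "q * ?Y t j $ a $ a \<le> ip Q (?Y t)" for t
    proof -
      have "0 \<le> ip (\<lambda>k. Q k - q *\<^sub>R bas j a a k) (?Y t)"
        by (rule psd_pow_ip[OF p ps])
      then show ?thesis by (simp add: ip_diff ip_scale ip_bas_l)
    qed
    have "(\<lambda>t. ip Q (?Y t) / q) \<longlonglongrightarrow> 0 / q"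
      by (intro tendsto_divide Qlim tendsto_const) (use q in auto)
    then have lim: "(\<lambda>t. ip Q (?Y t) / q) \<longlonglongrightarrow> 0" by simp
    have "\<forall>t. norm (?Y t j $ a $ a) \<le> ip Q (?Y t) / q"
      using nn le q(1) by (simp add: field_simps mult.commute)
    from Lim_null_comparison[OF always_eventually[OF this] lim] show ?thesis .
  qed
  have off: "(\<lambda>t. ?Y t j $ a $ b) \<longlonglongrightarrow> 0" for j a b
  proof -
    have b: "blk ((?T ^^ t) (bas j a a)) ((?T ^^ t) (bas j a b)) ((?T ^^ t) (bas j b b))" for t
      by (rule blk_pow[OF p blk_off])
    have ent: "?Y t k $ c $ d = x0 \<bullet> ((?T ^^ t) (bas k c d) i0 *v x0)" for t k c d
    proof -
      have "?Y t k $ c $ d = ip (bas k c d) (?Y t)" by (simp add: ip_bas_l)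
      also have "\<dots> = x0 \<bullet> ((?T ^^ t) (bas k c d) i0 *v x0)" by (simp add: ip_sm ip_ini)
      finally show ?thesis .
    qed
    have le: "\<bar>?Y t j $ a $ b\<bar> \<le> (?Y t j $ a $ a + ?Y t j $ b $ b) / 2" for t
    proof -
      have "0 \<le> x0 \<bullet> ((?T ^^ t) (bas j a a) i0 *v x0) + 2 * (x0 \<bullet> ((?T ^^ t) (bas j a b) i0 *v x0))
          + x0 \<bullet> ((?T ^^ t) (bas j b b) i0 *v x0)"
        using b[of t] unfolding blk_def by blast
      moreover have "0 \<le> x0 \<bullet> ((?T ^^ t) (bas j a a) i0 *v x0) + 2 * (x0 \<bullet> ((?T ^^ t) (bas j a b) i0 *v (-x0)))
          + (-x0) \<bullet> ((?T ^^ t) (bas j b b) i0 *v (-x0))"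
        using b[of t] unfolding blk_def by blast
      ultimately show ?thesis
        unfolding ent by (intro abs_half) (simp_all add: mv_neg)
    qed
    have "(\<lambda>t. (?Y t j $ a $ a + ?Y t j $ b $ b) / 2) \<longlonglongrightarrow> (0 + 0) / 2"
      by (intro tendsto_intros diag) simp
    then have lim: "(\<lambda>t. (?Y t j $ a $ a + ?Y t j $ b $ b) / 2) \<longlonglongrightarrow> 0" by simp
    have "\<forall>t. norm (?Y t j $ a $ b) \<le> (?Y t j $ a $ a + ?Y t j $ b $ b) / 2"
      using le by simp
    from Lim_null_comparison[OF always_eventually[OF this] lim] show ?thesis .
  qed
  show "(\<lambda>t. \<Sum>i\<in>UNIV. ?Y t i) \<longlonglongrightarrow> 0"
  proof (rule vec_tendstoI)
    fix a
    show "(\<lambda>t. (\<Sum>i\<in>UNIV. ?Y t i) $ a) \<longlonglongrightarrow> 0 $ a"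
    proof (rule vec_tendstoI)
      fix b
      show "(\<lambda>t. (\<Sum>i\<in>UNIV. ?Y t i) $ a $ b) \<longlonglongrightarrow> 0 $ a $ b"
        by (simp add: sum_component) (intro tendsto_null_sum off)
    qed
  qed
qed

lemma tq': "(B *v x) \<bullet> y = x \<bullet> (transpose B *v y)"
  for B :: "real^'n^'m"
  by (rule tq[symmetric])

lemma sym_inner: "transpose E = E \<Longrightarrow> x \<bullet> (E *v y) = y \<bullet> (E *v x)"
  for E :: "real^'n^'n"
  by (metis tq inner_commute)

lemma lin_helper:
  fixes dM dR dB dl S T x zz cc :: real
  shows "dM = dR + dB \<Longrightarrow> dl = 2 * S \<Longrightarrow> dM = T \<Longrightarrow> T \<le> 2 * S \<Longrightarrow> 0 \<le> S
    \<Longrightarrow> cc + 2 * (x - dl) + dB + (zz - 2 * x + dR) \<le> zz + cc"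
  by (smt (verit))

lemma key_vec:
  fixes E :: "real^'n^'n" and R :: "real^'m^'m" and B :: "real^'m^'n"
    and c :: "real^'n" and z l :: "real^'m"
  assumes symE: "transpose E = E" and symR: "transpose R = R"
    and l: "l = R *v z - transpose B *v (E *v c)"
    and bnd: "\<forall>w. w \<bullet> ((R + transpose B ** E ** B) *v w) \<le> mx * (w \<bullet> w)"
    and eta: "0 < \<eta>" "2 * \<eta> * mx \<le> 1"
  shows "(c + B *v ((2*\<eta>) *\<^sub>R l)) \<bullet> (E *v (c + B *v ((2*\<eta>) *\<^sub>R l)))
      + (z - (2*\<eta>) *\<^sub>R l) \<bullet> (R *v (z - (2*\<eta>) *\<^sub>R l)) \<le> z \<bullet> (R *v z) + c \<bullet> (E *v c)"
proof -
  define d where "d = (2*\<eta>) *\<^sub>R l"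
  have h1: "(c + B *v d) \<bullet> (E *v (c + B *v d)) = c \<bullet> (E *v c) + 2 * ((B *v d) \<bullet> (E *v c)) + (B *v d) \<bullet> (E *v (B *v d))"
    using sym_inner[OF symE, of c "B *v d"]
    by (simp add: matrix_vector_right_distrib inner_add_left inner_add_right)
  have h2: "(B *v d) \<bullet> (E *v c) = d \<bullet> (R *v z) - d \<bullet> l"
    by (simp add: tq' l inner_diff_right)
  have h3: "(B *v d) \<bullet> (E *v (B *v d)) = d \<bullet> ((transpose B ** E ** B) *v d)"
    by (simp add: qf)
  have h4: "(z - d) \<bullet> (R *v (z - d)) = z \<bullet> (R *v z) - 2 * (d \<bullet> (R *v z)) + d \<bullet> (R *v d)"
    using sym_inner[OF symR, of z d]
    by (simp add: matrix_vector_mult_diff_distrib inner_diff_left inner_diff_right)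
  have h5: "d \<bullet> ((R + transpose B ** E ** B) *v d) = d \<bullet> (R *v d) + d \<bullet> ((transpose B ** E ** B) *v d)"
    by (simp add: matrix_vector_mult_add_rdistrib inner_add_right)
  have h6: "d \<bullet> l = 2 * (\<eta> * (l \<bullet> l))" by (simp add: d_def)
  have h7: "d \<bullet> ((R + transpose B ** E ** B) *v d) = (2*\<eta>) * (2*\<eta>) * (l \<bullet> ((R + transpose B ** E ** B) *v l))"
    by (simp add: d_def matrix_vector_mult_scaleR)
  have ll: "0 \<le> l \<bullet> l" by simp
  have b1: "l \<bullet> ((R + transpose B ** E ** B) *v l) \<le> mx * (l \<bullet> l)" using bnd by blast
  have "(2*\<eta>) * (2*\<eta>) * (l \<bullet> ((R + transpose B ** E ** B) *v l)) \<le> (2*\<eta>) * (2*\<eta>) * (mx * (l \<bullet> l))"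
    using b1 eta(1) by (intro mult_left_mono) auto
  also have "\<dots> = (2 * \<eta> * (l \<bullet> l)) * (2 * \<eta> * mx)" by (simp add: mult_ac)
  also have "\<dots> \<le> (2 * \<eta> * (l \<bullet> l)) * 1"
    using eta ll by (intro mult_left_mono) auto
  finally have b2: "(2*\<eta>) * (2*\<eta>) * (l \<bullet> ((R + transpose B ** E ** B) *v l)) \<le> 2 * (\<eta> * (l \<bullet> l))" by simp
  have "0 \<le> \<eta> * (l \<bullet> l)" using eta ll by simp
  then show ?thesis
    unfolding d_def[symmetric] h1 h2 h3 h4
    by (rule lin_helper[OF h5 h6 h7 b2])
qed

lemma pd_bound:
  fixes M :: "real^'n^'n"
  assumes "pos_def M"
  shows "\<exists>q>0. \<forall>u. q * (u \<bullet> u) \<le> u \<bullet> (M *v u)"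
proof -
  let ?f = "\<lambda>u. u \<bullet> (M *v u)"
  have pos: "\<And>x. x \<noteq> 0 \<Longrightarrow> 0 < ?f x" using assms unfolding pos_def_def by blast
  have cont: "continuous_on (sphere 0 1) ?f"
    by (intro continuous_intros bounded_linear.continuous_on[OF matrix_vector_mul_bounded_linear])
  obtain a :: 'n where True by simp
  have ne: "sphere (0::real^'n) 1 \<noteq> {}"
  proof -
    have "axis a (1::real) \<in> sphere 0 1" by simp
    then show ?thesis by blast
  qed
  obtain x where x: "x \<in> sphere 0 1" "\<forall>y\<in>sphere 0 1. ?f x \<le> ?f y"
    using continuous_attains_inf[OF compact_sphere ne cont] by blast
  have "x \<noteq> 0" using x(1) by auto
  then have q: "0 < ?f x" by (rule pos)
  show ?thesis
  proof (intro exI conjI allI)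
    show "0 < ?f x" by (rule q)
    fix u :: "real^'n"
    show "?f x * (u \<bullet> u) \<le> u \<bullet> (M *v u)"
    proof (cases "u = 0")
      case True then show ?thesis by simp
    next
      case False
      define w where "w = (1 / norm u) *\<^sub>R u"
      have nu: "norm u > 0" using False by simp
      have "w \<in> sphere 0 1" using nu by (simp add: w_def)
      then have "?f x \<le> ?f w" using x(2) by blast
      moreover have "?f w = ?f u / (norm u)^2"
        using nu by (simp add: w_def matrix_vector_mult_scaleR power2_eq_square field_simps)
      moreover have "u \<bullet> u = (norm u)^2" by (simp add: power2_norm_eq_inner)
      ultimately show ?thesis using nu by (simp add: field_simps)
    qed
  qed
qed

lemma spec_bound: "w \<bullet> (M *v w) \<le> spec_norm M * (w \<bullet> w)"
  for M :: "real^'n^'n"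
proof -
  have "w \<bullet> (M *v w) \<le> norm w * norm (M *v w)" by (rule norm_cauchy_schwarz)
  also have "\<dots> \<le> norm w * (spec_norm M * norm w)"
    unfolding spec_norm_def
    by (intro mult_left_mono onorm matrix_vector_mul_bounded_linear) auto
  also have "\<dots> = spec_norm M * (w \<bullet> w)"
    by (simp add: power2_norm_eq_inner[symmetric] power2_eq_square)
  finally show ?thesis .
qed

lemma pos_def_nn: "pos_def M \<Longrightarrow> 0 \<le> u \<bullet> (M *v u)"
  unfolding pos_def_def by (cases "u = 0") (auto intro: less_imp_le)

theorem lemma8:
  fixes A :: "'s::finite \<Rightarrow> real^'n^'n" and B :: "'s \<Rightarrow> real^'m^'n"
    and Q :: "'s \<Rightarrow> real^'n^'n" and R :: "'s \<Rightarrow> real^'m^'m"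
    and p :: "'s \<Rightarrow> 's \<Rightarrow> real" and K K' :: "'s \<Rightarrow> real^'n^'m" and \<eta> :: real
  assumes "stochastic p"
    and "\<exists>K0. K0 \<in> stabilizing_set A B p"
    and "\<forall>i. pos_def (Q i)" and "\<forall>i. pos_def (R i)"
    and "K \<in> stabilizing_set A B p"
    and "K' = (\<lambda>i. K i - (2 * \<eta>) *\<^sub>R L_of A B Q R p K i)"
    and "0 < \<eta>"
    and "\<eta> \<le> 1 / (2 * max_norm (\<lambda>i. R i + transpose (B i) ** Emap p (P_of A B Q R p K) i ** B i))"
  shows "K' \<in> stabilizing_set A B p"
proof -
  have p: "\<forall>i j. 0 \<le> p i j" using assms(1) unfolding stochastic_def by blast
  have stK: "ms_stable A B p K" using assms(5) unfolding stabilizing_set_def by blast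
  have symQ: "\<forall>i. transpose (Q i) = Q i" using assms(3) unfolding pos_def_def by blast
  have symR: "\<forall>i. transpose (R i) = R i" using assms(4) unfolding pos_def_def by blast
  define P where "P = P_of A B Q R p K"
  define E where "E i = Emap p P i" for i
  define M where "M i = R i + transpose (B i) ** E i ** B i" for i
  define mx where "mx = max_norm M"
  have eq: "\<forall>i. P i = (Q i + transpose (K i) ** R i ** K i) + tadj A B p K P i"
    unfolding P_def by (rule P_of_eq[OF p stK])
  have Psym: "transpose (P i) = P i" for i
    unfolding P_def by (rule P_sym[OF p stK symQ symR])
  have Esym: "transpose (E i) = E i" for i
    unfolding E_def transpose_Emap Psym by simp
  have Wpsd: "psd (\<lambda>i. Q i + transpose (K i) ** R i ** K i)"
    unfolding psd_def
  proof (intro allI)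
    fix j u
    have "u \<bullet> ((Q j + transpose (K j) ** R j ** K j) *v u) = u \<bullet> (Q j *v u) + (K j *v u) \<bullet> (R j *v (K j *v u))"
      by (simp add: matrix_vector_mult_add_rdistrib inner_add_right qf)
    moreover have "0 \<le> u \<bullet> (Q j *v u)" using assms(3) pos_def_nn by blast
    moreover have "0 \<le> (K j *v u) \<bullet> (R j *v (K j *v u))" using assms(4) pos_def_nn by blast
    ultimately show "0 \<le> u \<bullet> ((Q j + transpose (K j) ** R j ** K j) *v u)" by simp
  qed
  have Ppsd: "psd P"
    unfolding psd_def P_def using P_psd[OF p stK Wpsd] by blast
  have eta_le: "\<eta> \<le> 1 / (2 * mx)"
    using assms(8) unfolding mx_def M_def E_def P_def .
  have mxpos: "0 < mx"
  proof (rule ccontr)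
    assume "\<not> 0 < mx"
    then have "1 / (2 * mx) \<le> 0" by (simp add: divide_nonpos_nonneg)
    then show False using eta_le assms(7) by linarith
  qed
  have eta2: "2 * \<eta> * mx \<le> 1"
    using eta_le mxpos by (simp add: le_divide_eq mult_ac)
  have bnd: "\<forall>w. w \<bullet> (M i *v w) \<le> mx * (w \<bullet> w)" for i
  proof
    fix w :: "real^'m"
    have "spec_norm (M i) \<le> mx"
      unfolding mx_def max_norm_def by (rule Max_ge) auto
    then have "spec_norm (M i) * (w \<bullet> w) \<le> mx * (w \<bullet> w)"
      by (intro mult_right_mono) auto
    with spec_bound[of w "M i"] show "w \<bullet> (M i *v w) \<le> mx * (w \<bullet> w)" by linarith
  qed
  have dec: "\<forall>i u. u \<bullet> (Q i *v u) + u \<bullet> (tadj A B p K' P i *v u) \<le> u \<bullet> (P i *v u)"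
  proof (intro allI)
    fix i u
    define a where "a = A i *v u"
    define z where "z = K i *v u"
    define l where "l = L_of A B Q R p K i *v u"
    define c where "c = a - B i *v z"
    have Lform: "L_of A B Q R p K i = M i ** K i - transpose (B i) ** E i ** A i"
      unfolding L_of_def Let_def M_def E_def P_def by simp
    have hl: "l = R i *v z - transpose (B i) *v (E i *v c)"
      unfolding l_def Lform M_def c_def a_def z_def
      by (simp add: matrix_vector_mult_diff_rdistrib matrix_vector_mult_add_rdistrib
          matrix_vector_mul_assoc[symmetric] matrix_vector_mult_diff_distrib)
    have hC: "closed_loop A B K i *v u = c"
      unfolding closed_loop_def c_def a_def z_def
      by (simp add: matrix_vector_mult_diff_rdistrib matrix_vector_mul_assoc[symmetric])
    have hK': "K' i *v u = z - (2 * \<eta>) *\<^sub>R l"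
      unfolding assms(6) z_def l_def
      by (simp add: matrix_vector_mult_diff_rdistrib scaleR_matrix_vector_assoc[symmetric])
    have hC': "closed_loop A B K' i *v u = c + B i *v ((2 * \<eta>) *\<^sub>R l)"
    proof -
      have "closed_loop A B K' i *v u = a - B i *v (K' i *v u)"
        unfolding closed_loop_def a_def
        by (simp add: matrix_vector_mult_diff_rdistrib matrix_vector_mul_assoc[symmetric])
      also have "\<dots> = c + B i *v ((2 * \<eta>) *\<^sub>R l)"
        unfolding hK' c_def by (simp add: matrix_vector_mult_diff_distrib)
      finally show ?thesis .
    qed
    have hP: "u \<bullet> (P i *v u) = u \<bullet> (Q i *v u) + z \<bullet> (R i *v z) + c \<bullet> (E i *v c)"
    proof -
      have "u \<bullet> (P i *v u) = u \<bullet> (((Q i + transpose (K i) ** R i ** K i) + tadj A B p K P i) *v u)"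
        using eq by metis
      also have "\<dots> = u \<bullet> (Q i *v u) + z \<bullet> (R i *v z) + c \<bullet> (E i *v c)"
        unfolding tadj_def
        by (simp add: matrix_vector_mult_add_rdistrib inner_add_right qf hC z_def E_def)
      finally show ?thesis .
    qed
    have hT: "u \<bullet> (tadj A B p K' P i *v u) = (c + B i *v ((2 * \<eta>) *\<^sub>R l)) \<bullet> (E i *v (c + B i *v ((2 * \<eta>) *\<^sub>R l)))"
      unfolding tadj_def qf hC' E_def ..
    have bM: "\<forall>w. w \<bullet> ((R i + transpose (B i) ** E i ** B i) *v w) \<le> mx * (w \<bullet> w)"
      using bnd[of i] unfolding M_def .
    have key: "(c + B i *v ((2*\<eta>) *\<^sub>R l)) \<bullet> (E i *v (c + B i *v ((2*\<eta>) *\<^sub>R l)))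
      + (z - (2*\<eta>) *\<^sub>R l) \<bullet> (R i *v (z - (2*\<eta>) *\<^sub>R l)) \<le> z \<bullet> (R i *v z) + c \<bullet> (E i *v c)"
      by (rule key_vec[OF Esym symR[rule_format] hl bM assms(7) eta2])
    have "0 \<le> (z - (2*\<eta>) *\<^sub>R l) \<bullet> (R i *v (z - (2*\<eta>) *\<^sub>R l))"
      using assms(4) pos_def_nn by blast
    then show "u \<bullet> (Q i *v u) + u \<bullet> (tadj A B p K' P i *v u) \<le> u \<bullet> (P i *v u)"
      unfolding hP hT using key by linarith
  qed
  have Qpd: "\<forall>i. \<exists>q>0. \<forall>u. q * (u \<bullet> u) \<le> u \<bullet> (Q i *v u)"
    using assms(3) pd_bound by blast
  have "ms_stable A B p K'"
    by (rule lyap_stable[OF p Ppsd dec Qpd])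
  then show ?thesis unfolding stabilizing_set_def by blast
qed

end
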